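(* If $M$ is a finite monoid that is not commutative, then for every stable order $\le$ on $M$, the ordered monoid $(M,\le)$ satisfies $N^1(M)=\Omega(\log n)$.
   Context: A stable order on a monoid $M$ is a partial order with $x\le y\Rightarrow zx\le zy$ and $xz\le yz$ for all $z\in M$. Non-deterministic communication complexity: for $f:X\times Y\to\{0,1\}$, $N^1(f)$ is the minimum cost of a non-deterministic protocol for $f$; equivalently, up to an additive constant 2, $N^1(f)=\log_2 C^1(f)$, where $C^1(f)$ is the minimum number of rectangles $S\times T\subseteq X\times Y$ on which $f\equiv1$ whose union is $f^{-1}(1)$. An order ideal is a subset $I\subseteq M$ with $y\in I, x\le y\Rightarrow x\in I$. For an order ideal $I$, $N^1(M,I)(n)$ is $N^1$ of the function where Alice receives $m_1,m_3,\dots,m_{2n-1}\in M$, Bob receives $m_2,\dots,m_{2n}\in M$, with value $1$ iff $m_1\cdots m_{2n}\in I$; $N^1(M)(n)=\max_I N^1(M,I)(n)$ over all order ideals. Asymptotics are as $n\to\infty$. *)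

theory Defs
  imports "HOL-Algebra.Group" "HOL-Library.Landau_Symbols"
begin

definition stable_order :: "('a, 'b) monoid_scheme \<Rightarrow> ('a \<Rightarrow> 'a \<Rightarrow> bool) \<Rightarrow> bool" where
  "stable_order M leq \<longleftrightarrow>
     (\<forall>x\<in>carrier M. leq x x) \<and>
     (\<forall>x\<in>carrier M. \<forall>y\<in>carrier M. leq x y \<and> leq y x \<longrightarrow> x = y) \<and>
     (\<forall>x\<in>carrier M. \<forall>y\<in>carrier M. \<forall>z\<in>carrier M. leq x y \<and> leq y z \<longrightarrow> leq x z) \<and>
     (\<forall>x\<in>carrier M. \<forall>y\<in>carrier M. \<forall>z\<in>carrier M.
        leq x y \<longrightarrow> leq (z \<otimes>\<^bsub>M\<^esub> x) (z \<otimes>\<^bsub>M\<^esub> y) \<and> leq (x \<otimes>\<^bsub>M\<^esub> z) (y \<otimes>\<^bsub>M\<^esub> z))"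

definition order_ideal :: "('a, 'b) monoid_scheme \<Rightarrow> ('a \<Rightarrow> 'a \<Rightarrow> bool) \<Rightarrow> 'a set \<Rightarrow> bool" where
  "order_ideal M leq I \<longleftrightarrow> I \<subseteq> carrier M \<and>
     (\<forall>y\<in>I. \<forall>x\<in>carrier M. leq x y \<longrightarrow> x \<in> I)"

definition C1 :: "'x set \<Rightarrow> 'y set \<Rightarrow> ('x \<Rightarrow> 'y \<Rightarrow> bool) \<Rightarrow> nat" where
  "C1 X Y f = (LEAST k. \<exists>R :: ('x set \<times> 'y set) set. finite R \<and> card R = k \<and>
       (\<forall>(S, T)\<in>R. S \<subseteq> X \<and> T \<subseteq> Y \<and> (\<forall>x\<in>S. \<forall>y\<in>T. f x y)) \<and>
       (\<Union>(S, T)\<in>R. S \<times> T) = {(x, y). x \<in> X \<and> y \<in> Y \<and> f x y})"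

text \<open>N^1 = log2 C^1 (equal to the protocol cost up to an additive constant);
  by convention a function with no 1-inputs gets cost 0.\<close>
definition N1 :: "'x set \<Rightarrow> 'y set \<Rightarrow> ('x \<Rightarrow> 'y \<Rightarrow> bool) \<Rightarrow> real" where
  "N1 X Y f = log 2 (max 1 (real (C1 X Y f)))"

text \<open>Interleaved product m1 m2 m3 ... m2n, where Alice holds xs = [m1, m3, ...]
  and Bob holds ys = [m2, m4, ...].\<close>
definition interleave_prod :: "('a, 'b) monoid_scheme \<Rightarrow> 'a list \<Rightarrow> 'a list \<Rightarrow> 'a" where
  "interleave_prod M xs ys =
     foldr (\<lambda>(a, b) acc. a \<otimes>\<^bsub>M\<^esub> (b \<otimes>\<^bsub>M\<^esub> acc)) (zip xs ys) \<one>\<^bsub>M\<^esub>"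

definition inputs :: "('a, 'b) monoid_scheme \<Rightarrow> nat \<Rightarrow> 'a list set" where
  "inputs M n = {xs. length xs = n \<and> set xs \<subseteq> carrier M}"

definition N1_ideal :: "('a, 'b) monoid_scheme \<Rightarrow> 'a set \<Rightarrow> nat \<Rightarrow> real" where
  "N1_ideal M I n = N1 (inputs M n) (inputs M n) (\<lambda>xs ys. interleave_prod M xs ys \<in> I)"

definition N1_monoid :: "('a, 'b) monoid_scheme \<Rightarrow> ('a \<Rightarrow> 'a \<Rightarrow> bool) \<Rightarrow> nat \<Rightarrow> real" where
  "N1_monoid M leq n = Max {N1_ideal M I n | I. order_ideal M leq I}"

end

theory Submission
  imports Defs
begin

fun posl :: "'a \<Rightarrow> 'a \<Rightarrow> nat \<Rightarrow> nat \<Rightarrow> 'a list" where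
  "posl e c i 0 = []"
| "posl e c i (Suc n) = (case i of 0 \<Rightarrow> c # replicate n e | Suc i' \<Rightarrow> e # posl e c i' n)"

lemma posl_length[simp]: "length (posl e c i n) = n"
  by (induction n arbitrary: i) (auto split: nat.splits)

lemma posl_set: "set (posl e c i n) \<subseteq> {e, c}"
  by (induction n arbitrary: i) (auto split: nat.splits)

lemma ip_Cons: "interleave_prod M (x # xs) (y # ys) = x \<otimes>\<^bsub>M\<^esub> (y \<otimes>\<^bsub>M\<^esub> interleave_prod M xs ys)"
  by (simp add: interleave_prod_def)

lemma ip_rep: "monoid M \<Longrightarrow> interleave_prod M (replicate n \<one>\<^bsub>M\<^esub>) (replicate n \<one>\<^bsub>M\<^esub>) = \<one>\<^bsub>M\<^esub>"
  by (induction n) (auto simp: ip_Cons monoid.l_one, simp add: interleave_prod_def)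

lemma ip_rep_l: "monoid M \<Longrightarrow> q \<in> carrier M \<Longrightarrow> j < n \<Longrightarrow>
   interleave_prod M (replicate n \<one>\<^bsub>M\<^esub>) (posl \<one>\<^bsub>M\<^esub> q j n) = q"
proof (induction n arbitrary: j)
  case 0 then show ?case by simp
next
  case (Suc n) then show ?case
    by (cases j) (auto simp: ip_Cons ip_rep monoid.l_one monoid.r_one)
qed

lemma ip_rep_r: "monoid M \<Longrightarrow> p \<in> carrier M \<Longrightarrow> i < n \<Longrightarrow>
   interleave_prod M (posl \<one>\<^bsub>M\<^esub> p i n) (replicate n \<one>\<^bsub>M\<^esub>) = p"
proof (induction n arbitrary: i)
  case 0 then show ?case by simp
next
  case (Suc n) then show ?case
    by (cases i) (auto simp: ip_Cons ip_rep monoid.l_one monoid.r_one)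
qed

lemma ip_pos: "monoid M \<Longrightarrow> p \<in> carrier M \<Longrightarrow> q \<in> carrier M \<Longrightarrow> i < n \<Longrightarrow> j < n \<Longrightarrow>
   interleave_prod M (posl \<one>\<^bsub>M\<^esub> p i n) (posl \<one>\<^bsub>M\<^esub> q j n) =
     (if i \<le> j then p \<otimes>\<^bsub>M\<^esub> q else q \<otimes>\<^bsub>M\<^esub> p)"
proof (induction n arbitrary: i j)
  case 0 then show ?case by simp
next
  case (Suc n) then show ?case
    by (cases i; cases j) (auto simp: ip_Cons ip_rep ip_rep_l ip_rep_r monoid.l_one monoid.r_one monoid.m_closed)
qed

lemma C1_lower:
  fixes X :: "'x set" and Y :: "'y set"
  assumes fX: "finite X" and fY: "finite Y"
    and inX: "\<And>i. i < n \<Longrightarrow> xs i \<in> X" and inY: "\<And>i. i < n \<Longrightarrow> ys i \<in> Y"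
    and one: "\<And>i. i < n \<Longrightarrow> f (xs i) (ys i)"
    and zero: "\<And>i k. i < k \<Longrightarrow> k < n \<Longrightarrow> \<not> f (xs k) (ys i)"
  shows "n \<le> C1 X Y f"
proof -
  define P where "P = (\<lambda>k. \<exists>R :: ('x set \<times> 'y set) set. finite R \<and> card R = k \<and>
       (\<forall>(S, T)\<in>R. S \<subseteq> X \<and> T \<subseteq> Y \<and> (\<forall>x\<in>S. \<forall>y\<in>T. f x y)) \<and>
       (\<Union>(S, T)\<in>R. S \<times> T) = {(x, y). x \<in> X \<and> y \<in> Y \<and> f x y})"
  define ones where "ones = {(x, y). x \<in> X \<and> y \<in> Y \<and> f x y}"
  define R0 where "R0 = (\<lambda>(x,y). ({x},{y})) ` ones"
  have "finite ones" unfolding ones_def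
    by (rule finite_subset[OF _ finite_cartesian_product[OF fX fY]]) auto
  hence "P (card R0)" unfolding P_def R0_def
    by (intro exI[of _ R0]) (auto simp: R0_def ones_def)
  hence "P (C1 X Y f)" unfolding C1_def P_def[symmetric] by (rule LeastI)
  then obtain R where fR: "finite R" and cR: "card R = C1 X Y f"
    and mono: "\<forall>(S, T)\<in>R. S \<subseteq> X \<and> T \<subseteq> Y \<and> (\<forall>x\<in>S. \<forall>y\<in>T. f x y)"
    and cov: "(\<Union>(S, T)\<in>R. S \<times> T) = {(x, y). x \<in> X \<and> y \<in> Y \<and> f x y}"
    unfolding P_def by blast
  have "\<forall>i<n. \<exists>r\<in>R. xs i \<in> fst r \<and> ys i \<in> snd r"
  proof (intro allI impI)
    fix i assume "i < n"
    hence "(xs i, ys i) \<in> (\<Union>(S, T)\<in>R. S \<times> T)" using cov inX inY one by auto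
    thus "\<exists>r\<in>R. xs i \<in> fst r \<and> ys i \<in> snd r" by force
  qed
  then obtain g where g: "\<And>i. i < n \<Longrightarrow> g i \<in> R \<and> xs i \<in> fst (g i) \<and> ys i \<in> snd (g i)"
    by metis
  have "inj_on g {..<n}"
  proof (rule inj_onI, rule ccontr)
    fix i k assume i: "i \<in> {..<n}" and k: "k \<in> {..<n}" and e: "g i = g k" and ne: "i \<noteq> k"
    have mi: "\<forall>x\<in>fst (g i). \<forall>y\<in>snd (g i). f x y" using mono g i by (cases "g i") fastforce
    show False
    proof (cases "i < k")
      case True
      have "f (xs k) (ys i)" using mi g[of k] g[of i] i k e by auto
      thus False using zero[OF True] k by auto
    next
      case False
      hence "k < i" using ne by auto
      have "f (xs i) (ys k)" using mi g[of k] g[of i] i k e by auto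
      thus False using zero[OF \<open>k < i\<close>] i by auto
    qed
  qed
  moreover have "g ` {..<n} \<subseteq> R" using g by auto
  ultimately have "card {..<n} \<le> card R" by (metis card_inj_on_le fR)
  thus ?thesis using cR by simp
qed

lemma inputs_finite: "finite (carrier M) \<Longrightarrow> finite (inputs M n)"
  unfolding inputs_def using finite_lists_length_eq[of "carrier M" n]
  by (simp add: conj_commute)

lemma N1_ideal_lower:
  assumes M: "monoid M" and fin: "finite (carrier M)"
    and p: "p \<in> carrier M" and q: "q \<in> carrier M"
    and pq: "p \<otimes>\<^bsub>M\<^esub> q \<in> I" and qp: "q \<otimes>\<^bsub>M\<^esub> p \<notin> I" and n: "n \<ge> 1"
  shows "log 2 (real n) \<le> N1_ideal M I n"
proof -
  have one: "\<one>\<^bsub>M\<^esub> \<in> carrier M" using M by (simp add: monoid.one_closed)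
  have inp: "\<And>c i. c \<in> carrier M \<Longrightarrow> posl \<one>\<^bsub>M\<^esub> c i n \<in> inputs M n"
    unfolding inputs_def using posl_set one by fastforce
  have "n \<le> C1 (inputs M n) (inputs M n) (\<lambda>xs ys. interleave_prod M xs ys \<in> I)"
  proof (rule C1_lower[where xs="\<lambda>i. posl \<one>\<^bsub>M\<^esub> p i n" and ys="\<lambda>i. posl \<one>\<^bsub>M\<^esub> q i n"])
    show "finite (inputs M n)" by (rule inputs_finite[OF fin])
    show "finite (inputs M n)" by (rule inputs_finite[OF fin])
    show "posl \<one>\<^bsub>M\<^esub> p i n \<in> inputs M n" for i by (rule inp[OF p])
    show "posl \<one>\<^bsub>M\<^esub> q i n \<in> inputs M n" for i by (rule inp[OF q])
    show "interleave_prod M (posl \<one>\<^bsub>M\<^esub> p i n) (posl \<one>\<^bsub>M\<^esub> q i n) \<in> I" if "i < n" for i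
      using ip_pos[OF M p q that that] pq by simp
    show "\<not> interleave_prod M (posl \<one>\<^bsub>M\<^esub> p k n) (posl \<one>\<^bsub>M\<^esub> q i n) \<in> I"
      if "i < k" "k < n" for i k
      using ip_pos[OF M p q that(2)] that qp by simp
  qed
  hence "real n \<le> max 1 (real (C1 (inputs M n) (inputs M n) (\<lambda>xs ys. interleave_prod M xs ys \<in> I)))"
    by linarith
  thus ?thesis unfolding N1_ideal_def N1_def using n by (intro log_mono) auto
qed

theorem mainTheorem6:
  fixes M :: "('a, 'b) monoid_scheme" and leq :: "'a \<Rightarrow> 'a \<Rightarrow> bool"
  assumes "monoid M" and "finite (carrier M)" and "\<not> comm_monoid M"
    and "stable_order M leq"
  shows "N1_monoid M leq \<in> \<Omega>(\<lambda>n. ln (real n))"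
proof -
  note M = assms(1) and fin = assms(2)
  obtain a b where a: "a \<in> carrier M" and b: "b \<in> carrier M"
    and ab: "a \<otimes>\<^bsub>M\<^esub> b \<noteq> b \<otimes>\<^bsub>M\<^esub> a"
  proof -
    have "\<not> comm_monoid_axioms M" using assms(1,3) by (simp add: comm_monoid_def)
    then show ?thesis using that unfolding comm_monoid_axioms_def by blast
  qed
  have so: "(\<forall>x\<in>carrier M. leq x x) \<and>
    (\<forall>x\<in>carrier M. \<forall>y\<in>carrier M. leq x y \<and> leq y x \<longrightarrow> x = y) \<and>
    (\<forall>x\<in>carrier M. \<forall>y\<in>carrier M. \<forall>z\<in>carrier M. leq x y \<and> leq y z \<longrightarrow> leq x z)"
    using assms(4) unfolding stable_order_def by (elim conjE) (intro conjI)
  note ord = conjunct1[OF so] conjunct1[OF conjunct2[OF so]] conjunct2[OF conjunct2[OF so]]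
  have abc: "a \<otimes>\<^bsub>M\<^esub> b \<in> carrier M" "b \<otimes>\<^bsub>M\<^esub> a \<in> carrier M"
    using a b M by (auto simp: monoid.m_closed)
  obtain p q where p: "p \<in> carrier M" and q: "q \<in> carrier M"
    and nle: "\<not> leq (q \<otimes>\<^bsub>M\<^esub> p) (p \<otimes>\<^bsub>M\<^esub> q)"
  proof (cases "leq (b \<otimes>\<^bsub>M\<^esub> a) (a \<otimes>\<^bsub>M\<^esub> b)")
    case True
    hence "\<not> leq (a \<otimes>\<^bsub>M\<^esub> b) (b \<otimes>\<^bsub>M\<^esub> a)" using ord(2) abc ab by blast
    thus ?thesis using that[OF b a] by blast
  next
    case False thus ?thesis using that[OF a b] by blast
  qed
  have pqc: "p \<otimes>\<^bsub>M\<^esub> q \<in> carrier M" "q \<otimes>\<^bsub>M\<^esub> p \<in> carrier M"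
    using p q M by (auto simp: monoid.m_closed)
  define I where "I = {x \<in> carrier M. leq x (p \<otimes>\<^bsub>M\<^esub> q)}"
  have oi: "order_ideal M leq I" unfolding order_ideal_def
  proof (intro conjI ballI impI)
    show "I \<subseteq> carrier M" unfolding I_def by blast
    fix y x assume y: "y \<in> I" and x: "x \<in> carrier M" and xy: "leq x y"
    have "y \<in> carrier M" "leq y (p \<otimes>\<^bsub>M\<^esub> q)" using y unfolding I_def by auto
    hence "leq x (p \<otimes>\<^bsub>M\<^esub> q)" using ord(3) x xy pqc(1) by blast
    thus "x \<in> I" using x unfolding I_def by blast
  qed
  have pqI: "p \<otimes>\<^bsub>M\<^esub> q \<in> I" unfolding I_def using ord(1) pqc by auto
  have qpI: "q \<otimes>\<^bsub>M\<^esub> p \<notin> I" unfolding I_def using nle by auto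
  have fs: "finite {N1_ideal M I n | I. order_ideal M leq I}" for n
  proof -
    have "{N1_ideal M I n | I. order_ideal M leq I} \<subseteq> (\<lambda>I. N1_ideal M I n) ` Pow (carrier M)"
    proof
      fix x assume "x \<in> {N1_ideal M I n | I. order_ideal M leq I}"
      then obtain J where J: "x = N1_ideal M J n" "order_ideal M leq J" by blast
      have "J \<in> Pow (carrier M)" using J(2) unfolding order_ideal_def by blast
      thus "x \<in> (\<lambda>I. N1_ideal M I n) ` Pow (carrier M)" using J(1) by (rule rev_image_eqI)
    qed
    thus ?thesis using fin by (meson finite_Pow_iff finite_imageI finite_subset)
  qed
  have low: "ln (real n) \<le> N1_monoid M leq n" if n: "n \<ge> 1" for n
  proof -
    have "ln (real n) \<le> log 2 (real n)"
    proof -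
      have "ln (real n) \<ge> 0" using n by simp
      moreover have "ln 2 < (1::real)" using ln_2_less_1 .
      moreover have "ln 2 > (0::real)" by simp
      ultimately have "ln (real n) \<le> ln (real n) / ln 2"
        by (simp add: le_divide_eq mult_left_le)
      thus ?thesis by (simp add: log_def)
    qed
    also have "\<dots> \<le> N1_ideal M I n" by (rule N1_ideal_lower[OF M fin p q pqI qpI n])
    also have "\<dots> \<le> N1_monoid M leq n" unfolding N1_monoid_def
    proof (rule Max_ge[OF fs])
      show "N1_ideal M I n \<in> {N1_ideal M I n | I. order_ideal M leq I}" using oi by blast
    qed
    finally show ?thesis .
  qed
  show ?thesis
  proof (rule landau_omega.bigI[of 1])
    show "eventually (\<lambda>n. norm (N1_monoid M leq n) \<ge> 1 * norm (ln (real n))) at_top"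
      using eventually_ge_at_top[of "1::nat"]
    proof eventually_elim
      case (elim n)
      have "0 \<le> ln (real n)" using elim by simp
      thus ?case using low[OF elim] by simp
    qed
  qed simp
qed

end
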